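(* Let $S$ be an additively cancellative semiring with $1\neq 0$ and let $n\geq 2$. Then neither the semiring $M_n(S)$ of all $n\times n$ matrices over $S$ nor the semiring $T_n(S)$ of all upper triangular $n\times n$ matrices over $S$ is centrally essential.
   Context: A semiring is a set $S$ with two binary operations $+$ and $\cdot$ such that $(S,+)$ is a commutative monoid with neutral element $0$, $(S,\cdot)$ is a monoid with identity $1$, multiplication distributes over addition on both sides, and $0s=s0=0$ for all $s\in S$. $M_n(S)$ and $T_n(S)$ carry the usual matrix addition and multiplication. The center is $C(R)=\{r\in R: rr'=r'r \text{ for all } r'\in R\}$. A semiring $R$ is centrally essential if for every non-zero $x\in R$ there exist non-zero $y,z\in C(R)$ with $xy=z$. $S$ is additively cancellative if $x+z=y+z$ implies $x=y$. *)

theory Defs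
  imports "Jordan_Normal_Form.Matrix"
begin

definition center_of :: "'b set \<Rightarrow> ('b \<Rightarrow> 'b \<Rightarrow> 'b) \<Rightarrow> 'b set" where
  "center_of R mul = {r \<in> R. \<forall>r' \<in> R. mul r r' = mul r' r}"

definition centrally_essential :: "'b set \<Rightarrow> ('b \<Rightarrow> 'b \<Rightarrow> 'b) \<Rightarrow> 'b \<Rightarrow> bool" where
  "centrally_essential R mul zr \<longleftrightarrow>
     (\<forall>x \<in> R. x \<noteq> zr \<longrightarrow>
        (\<exists>y z. y \<in> center_of R mul \<and> z \<in> center_of R mul \<and> y \<noteq> zr \<and> z \<noteq> zr \<and> mul x y = z))"

end

theory Submission
  imports Defs
begin

definition Emat :: "nat \<Rightarrow> nat \<Rightarrow> nat \<Rightarrow> 'a::semiring_1 mat" where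
  "Emat n p q = mat n n (\<lambda>(i,j). if i = p \<and> j = q then 1 else 0)"

lemma Emat_carrier: "Emat n p q \<in> carrier_mat n n"
  by (simp add: Emat_def)

lemma Emat_ut: "p \<le> q \<Longrightarrow> upper_triangular (Emat n p q)"
  by (auto simp: Emat_def upper_triangular_def)

lemma Emat_index: "i < n \<Longrightarrow> j < n \<Longrightarrow> Emat n p q $$ (i,j) = (if i = p \<and> j = q then 1 else 0)"
  by (simp add: Emat_def)

lemma mult_Emat_right:
  assumes A: "A \<in> carrier_mat n n" and i: "i < n" and j: "j < n" and p: "p < n"
  shows "(A * Emat n p q) $$ (i,j) = (if j = q then A $$ (i,p) else 0)"
proof -
  have "(A * Emat n p q) $$ (i,j) = (\<Sum>k\<in>{0..<n}. A $$ (i,k) * (if k = p \<and> j = q then 1 else 0))"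
    using A i j by (auto simp: index_mult_mat scalar_prod_def Emat_def intro!: sum.cong)
  also have "\<dots> = (\<Sum>k\<in>{0..<n}. if k = p then (if j = q then A $$ (i,k) else 0) else 0)"
    by (rule sum.cong) auto
  also have "\<dots> = (if j = q then A $$ (i,p) else 0)"
    using p by (simp add: sum.delta)
  finally show ?thesis .
qed

lemma mult_Emat_left:
  assumes A: "A \<in> carrier_mat n n" and i: "i < n" and j: "j < n" and q: "q < n"
  shows "(Emat n p q * A) $$ (i,j) = (if i = p then A $$ (q,j) else 0)"
proof -
  have "(Emat n p q * A) $$ (i,j) = (\<Sum>k\<in>{0..<n}. (if i = p \<and> k = q then 1 else 0) * A $$ (k,j))"
    using A i j by (auto simp: index_mult_mat scalar_prod_def Emat_def intro!: sum.cong)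
  also have "\<dots> = (\<Sum>k\<in>{0..<n}. if k = q then (if i = p then A $$ (k,j) else 0) else 0)"
    by (rule sum.cong) auto
  also have "\<dots> = (if i = p then A $$ (q,j) else 0)"
    using q by (simp add: sum.delta)
  finally show ?thesis .
qed

lemma generic:
  fixes R :: "'a::semiring_1 mat set"
  assumes RC: "R \<subseteq> carrier_mat n n"
    and RE: "\<And>p q. p \<le> q \<Longrightarrow> q < n \<Longrightarrow> Emat n p q \<in> R"
    and n2: "n \<ge> 2"
  shows "\<not> centrally_essential R (*) (0\<^sub>m n n)"
proof
  assume ce: "centrally_essential R (*) (0\<^sub>m n n)"
  define m where "m = n - 1"
  have m: "m < n" "0 < m" using n2 by (auto simp: m_def)
  let ?x = "Emat n 0 m :: 'a mat"
  have xR: "?x \<in> R" using RE m by auto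
  have "?x $$ (0, m) \<noteq> 0\<^sub>m n n $$ (0, m)" using m by (simp add: Emat_index)
  hence "?x \<noteq> 0\<^sub>m n n" by metis
  then obtain y z where y: "y \<in> center_of R (*)" and z: "z \<in> center_of R (*)"
    and yn: "y \<noteq> 0\<^sub>m n n" and xy: "?x * y = z"
    using ce xR unfolding centrally_essential_def by blast
  have yR: "y \<in> R" and yc: "\<And>r. r \<in> R \<Longrightarrow> y * r = r * y" using y by (auto simp: center_of_def)
  have zR: "z \<in> R" and zc: "\<And>r. r \<in> R \<Longrightarrow> z * r = r * z" using z by (auto simp: center_of_def)
  have yC: "y \<in> carrier_mat n n" using yR RC by auto
  have zC: "z \<in> carrier_mat n n" using zR RC by auto
  have "(z * Emat n 0 0) $$ (0, m) = (Emat n 0 0 * z) $$ (0, m)"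
    using zc[OF RE[of 0 0]] m by simp
  hence z0: "z $$ (0, m) = 0"
    using m zC by (simp add: mult_Emat_right mult_Emat_left)
  have "z $$ (0, m) = y $$ (m, m)"
    using xy[symmetric] m yC by (simp add: mult_Emat_left)
  hence ymm: "y $$ (m, m) = 0" using z0 by simp
  have "y = 0\<^sub>m n n"
  proof (rule eq_matI)
    fix a b assume a: "a < dim_row (0\<^sub>m n n :: 'a mat)" and b: "b < dim_col (0\<^sub>m n n :: 'a mat)"
    hence a: "a < n" and b: "b < n" by auto
    show "y $$ (a, b) = 0\<^sub>m n n $$ (a, b)"
    proof (cases "a = b")
      case True
      have "a \<le> m" using a m_def by auto
      have "(y * Emat n a m) $$ (a, m) = (Emat n a m * y) $$ (a, m)"
        using yc[OF RE[of a m]] \<open>a \<le> m\<close> m by simp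
      hence "y $$ (a, a) = y $$ (m, m)" using a m yC by (simp add: mult_Emat_right mult_Emat_left)
      thus ?thesis using True ymm a b by simp
    next
      case False
      have "(y * Emat n b b) $$ (a, b) = (Emat n b b * y) $$ (a, b)"
        using yc[OF RE[of b b]] b by simp
      hence "y $$ (a, b) = 0" using a b False yC by (simp add: mult_Emat_right mult_Emat_left)
      thus ?thesis using a b by simp
    qed
  qed (use yC in auto)
  thus False using yn by simp
qed

theorem corollary2p4:
  fixes n :: nat
  assumes canc: "\<forall>x y z :: 'a :: semiring_1. x + z = y + z \<longrightarrow> x = y"
    and n2: "n \<ge> 2"
  shows "\<not> centrally_essential (carrier_mat n n :: 'a mat set) (*) (0\<^sub>m n n)
       \<and> \<not> centrally_essential {A \<in> carrier_mat n n :: 'a mat set. upper_triangular A} (*) (0\<^sub>m n n)"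
proof
  show "\<not> centrally_essential (carrier_mat n n :: 'a mat set) (*) (0\<^sub>m n n)"
    by (rule generic[OF _ _ n2]) (auto simp: Emat_carrier)
  show "\<not> centrally_essential {A \<in> carrier_mat n n :: 'a mat set. upper_triangular A} (*) (0\<^sub>m n n)"
    by (rule generic[OF _ _ n2]) (auto simp: Emat_carrier Emat_ut)
qed

end
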